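(* Let $(G,\sigma)$ be a connection graph. Then $\sigma$ is absolutely inconsistent (i.e. the connection Laplacian $\mathcal{L}^\sigma$ is invertible) if and only if for every $i\in V$ the matrix $I_{d\times d}-\Omega^1_i$ is positive definite.
   Context: A connection graph $(G,\sigma)$: finite connected weighted graph $G=(V,E,W)$, $V=\{1,\dots,n\}$, $w_{ij}>0$ iff $\{i,j\}\in E$, $\deg(i)=\sum_j w_{ij}$, and $\sigma$ mapping oriented edges to $\mathsf{O}(d)$ with $\sigma_{ji}=\sigma_{ij}^{\mathrm T}$. $\mathcal{L}^\sigma$ is the $nd\times nd$ block matrix with blocks $\deg(i)I_d$ on the diagonal, $-w_{ij}\sigma_{ij}$ for $i\sim j$, $0$ otherwise. Let $(X_t)$ be the simple random walk with transition probabilities $w_{ij}/\deg(i)$, $T^1_i=\inf\{t\ge1: X_t=i\}$, and $\Omega^1_i=\mathbb{E}\big[\prod_{\ell=1}^{T^1_i}\sigma_{X_{\ell-1}X_\ell}\mid X_0=i\big]$ (ordered product). *)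

theory Defs
  imports "HOL-Analysis.Analysis"
begin

text \<open>Weighted graph on a finite vertex type 'v, given by weights w (w i j > 0 iff i,j adjacent).\<close>

definition vdeg :: "('v::finite \<Rightarrow> 'v \<Rightarrow> real) \<Rightarrow> 'v \<Rightarrow> real" where
  "vdeg w i = (\<Sum>j\<in>UNIV. w i j)"

definition connection_graph ::
  "('v::finite \<Rightarrow> 'v \<Rightarrow> real) \<Rightarrow> ('v \<Rightarrow> 'v \<Rightarrow> real^'d::finite^'d) \<Rightarrow> bool" where
  "connection_graph w \<sigma> \<longleftrightarrow>
     (\<forall>i j. w i j \<ge> 0) \<and> (\<forall>i j. w i j = w j i) \<and> (\<forall>i. w i i = 0) \<and>
     (\<forall>i j. (i, j) \<in> ({(a, b). w a b > 0})\<^sup>*) \<and>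
     (\<forall>i j. w i j > 0 \<longrightarrow> orthogonal_matrix (\<sigma> i j) \<and> \<sigma> j i = transpose (\<sigma> i j))"

definition conn_laplacian ::
  "('v::finite \<Rightarrow> 'v \<Rightarrow> real) \<Rightarrow> ('v \<Rightarrow> 'v \<Rightarrow> real^'d::finite^'d) \<Rightarrow> real^('v \<times> 'd)^('v \<times> 'd)" where
  "conn_laplacian w \<sigma> = (\<chi> p q.
     if fst p = fst q then (if snd p = snd q then vdeg w (fst p) else 0)
     else if w (fst p) (fst q) > 0 then - w (fst p) (fst q) * (\<sigma> (fst p) (fst q) $ snd p $ snd q)
     else 0)"

fun walk_prod :: "('v \<Rightarrow> 'v \<Rightarrow> real^'d::finite^'d) \<Rightarrow> 'v list \<Rightarrow> real^'d^'d" where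
  "walk_prod \<sigma> (x # y # rest) = \<sigma> x y ** walk_prod \<sigma> (y # rest)"
| "walk_prod \<sigma> _ = mat 1"

text \<open>Probability that the simple random walk started at x0 follows the walk x0 x1 ... xT.\<close>
fun walk_prob :: "('v::finite \<Rightarrow> 'v \<Rightarrow> real) \<Rightarrow> 'v list \<Rightarrow> real" where
  "walk_prob w (x # y # rest) = (w x y / vdeg w x) * walk_prob w (y # rest)"
| "walk_prob w _ = 1"

text \<open>Walks x0 = i, x1, ..., xT = i with T >= 1 and x_l ~= i for 0 < l < T, along edges:
  the possible trajectories up to the first return time T^1_i.\<close>
definition first_return_walks :: "('v::finite \<Rightarrow> 'v \<Rightarrow> real) \<Rightarrow> 'v \<Rightarrow> 'v list set" where
  "first_return_walks w i = {p. length p \<ge> 2 \<and> hd p = i \<and> last p = i \<and>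
      (\<forall>l. 0 < l \<and> l < length p - 1 \<longrightarrow> p ! l \<noteq> i) \<and>
      (\<forall>l. l + 1 < length p \<longrightarrow> w (p ! l) (p ! (l + 1)) > 0)}"

text \<open>Omega^1_i = E[ prod_{l=1}^{T^1_i} sigma_{X_{l-1} X_l} | X_0 = i ], written out as the
  expectation over the (countably many) possible trajectories.\<close>
definition Omega1 ::
  "('v::finite \<Rightarrow> 'v \<Rightarrow> real) \<Rightarrow> ('v \<Rightarrow> 'v \<Rightarrow> real^'d::finite^'d) \<Rightarrow> 'v \<Rightarrow> real^'d^'d" where
  "Omega1 w \<sigma> i = infsum (\<lambda>p. walk_prob w p *\<^sub>R walk_prod \<sigma> p) (first_return_walks w i)"

definition pos_def :: "real^'d::finite^'d \<Rightarrow> bool" where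
  "pos_def A \<longleftrightarrow> (\<forall>x. x \<noteq> 0 \<longrightarrow> x \<bullet> (A *v x) > 0)"

end

theory Submission
  imports Defs
begin
lemma orth_norm:
  fixes Q :: "real^'n^'n"
  assumes "orthogonal_matrix Q"
  shows "norm (Q *v x) = norm x"
proof -
  have "(Q *v x) \<bullet> (Q *v x) = x \<bullet> x"
    using assms by (metis orthogonal_transformation_matrix orthogonal_transformation_def matrix_vector_mul_linear  matrix_of_matrix_vector_mul)
  then show ?thesis by (simp add: norm_eq_sqrt_inner)
qed

lemma orth_inj:
  fixes Q :: "real^'n^'n"
  assumes "orthogonal_matrix Q" "Q *v x = Q *v y"
  shows "x = y"
proof -
  have "Q *v (x - y) = 0" using assms(2) by (simp add: matrix_vector_mult_diff_distrib)
  then have "norm (x - y) = 0" using orth_norm[OF assms(1), of "x - y"] by simp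
  then show ?thesis by simp
qed

lemma orth_inner:
  fixes Q :: "real^'n^'n"
  assumes "orthogonal_matrix Q"
  shows "x \<bullet> (Q *v x) = (norm x)^2 - (norm (x - Q *v x))^2 / 2"
proof -
  have "(norm (x - Q *v x))^2 = (norm x)^2 - 2 * (x \<bullet> (Q *v x)) + (norm (Q *v x))^2"
    by (simp add: power2_norm_eq_inner inner_diff_left inner_diff_right inner_commute)
  then show ?thesis using orth_norm[OF assms, of x] by (simp add: field_simps)
qed

lemma orth_norm_bound:
  fixes Q :: "real^'n^'n"
  assumes "orthogonal_matrix Q"
  shows "norm Q \<le> real CARD('n)"
proof -
  have r: "norm (Q $ k) = 1" for k
    using assms unfolding orthogonal_matrix_orthonormal_rows row_def
    by (metis vec_lambda_eta)
  have "norm Q \<le> (\<Sum>k\<in>UNIV. norm (Q $ k))"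
    unfolding norm_vec_def by (rule L2_set_le_sum) simp
  also have "\<dots> = real CARD('n)" using r by simp
  finally show ?thesis .
qed

fun iswalk :: "('v \<Rightarrow> 'v \<Rightarrow> real) \<Rightarrow> 'v list \<Rightarrow> bool" where
  "iswalk w (a # b # r) = (w a b > 0 \<and> iswalk w (b # r))"
| "iswalk w _ = True"

lemma iswalk_nth:
  "iswalk w p \<longleftrightarrow> (\<forall>l. l + 1 < length p \<longrightarrow> w (p ! l) (p ! (l + 1)) > 0)"
proof (induction w p rule: iswalk.induct)
  case (1 w a b r)
  show ?case
  proof
    assume H: "iswalk w (a # b # r)"
    show "\<forall>l. l + 1 < length (a # b # r) \<longrightarrow> 0 < w ((a # b # r) ! l) ((a # b # r) ! (l + 1))"
    proof (intro allI impI)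
      fix l assume "l + 1 < length (a # b # r)"
      then show "0 < w ((a # b # r) ! l) ((a # b # r) ! (l + 1))"
        using H 1 by (cases l) auto
    qed
  next
    assume H: "\<forall>l. l + 1 < length (a # b # r) \<longrightarrow> 0 < w ((a # b # r) ! l) ((a # b # r) ! (l + 1))"
    have "w a b > 0" using H[rule_format, of 0] by simp
    moreover have "\<forall>l. l + 1 < length (b # r) \<longrightarrow> 0 < w ((b # r) ! l) ((b # r) ! (l + 1))"
      using H[rule_format, of "Suc _"] by auto
    ultimately show "iswalk w (a # b # r)" using 1 by simp
  qed
qed auto

lemma iswalk_concat:
  assumes "last (a # r) = hd q" "q \<noteq> []"
  shows "iswalk w ((a # r) @ tl q) \<longleftrightarrow> iswalk w (a # r) \<and> iswalk w q"
  using assms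
proof (induction r arbitrary: a)
  case Nil
  then show ?case by (cases q) auto
next
  case (Cons b r)
  then show ?case by auto
qed

lemma walk_prod_concat:
  assumes "last (a # r) = hd q" "q \<noteq> []"
  shows "walk_prod \<sigma> ((a # r) @ tl q) = walk_prod \<sigma> (a # r) ** walk_prod \<sigma> q"
  using assms
proof (induction r arbitrary: a)
  case Nil
  then show ?case by (cases q) auto
next
  case (Cons b r)
  then show ?case by (auto simp: matrix_mul_assoc)
qed

context
  fixes w :: "'v::finite \<Rightarrow> 'v \<Rightarrow> real" and \<sigma> :: "'v \<Rightarrow> 'v \<Rightarrow> real^'d::finite^'d"
  assumes cg: "connection_graph w \<sigma>"
begin

lemma w_nn: "w a b \<ge> 0" using cg unfolding connection_graph_def by blast
lemma w_sym: "w a b = w b a" using cg unfolding connection_graph_def by blast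
lemma w_diag: "w a a = 0" using cg unfolding connection_graph_def by blast
lemma conn: "(a, b) \<in> {(a, b). w a b > 0}\<^sup>*" using cg unfolding connection_graph_def by blast
lemma orth: "w a b > 0 \<Longrightarrow> orthogonal_matrix (\<sigma> a b)" using cg unfolding connection_graph_def by blast
lemma sig_tr: "w a b > 0 \<Longrightarrow> \<sigma> b a = transpose (\<sigma> a b)" using cg unfolding connection_graph_def by blast
lemma deg_nn: "vdeg w a \<ge> 0" by (simp add: vdeg_def sum_nonneg w_nn)

lemma walk_orth: "iswalk w p \<Longrightarrow> orthogonal_matrix (walk_prod \<sigma> p)"
proof (induction p rule: induct_list012)
  case (3 x y zs)
  then show ?case by (auto simp: orth orthogonal_matrix_mul)
qed (auto simp: orthogonal_matrix_id)

lemma path_exists: "\<exists>p. iswalk w (a # p) \<and> last (a # p) = b"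
  using conn[of a b]
proof (induction rule: rtrancl_induct)
  case base show ?case by (rule exI[of _ "[]"]) simp
next
  case (step y z)
  then obtain p where p: "iswalk w (a # p)" "last (a # p) = y" by blast
  have "iswalk w ((a # p) @ tl [y, z])" using step p iswalk_concat[of a p "[y, z]" w] by simp
  then show ?case by (intro exI[of _ "p @ [z]"]) simp
qed

lemma deg_pos:
  assumes "CARD('v) \<ge> 2"
  shows "vdeg w a > 0"
proof -
  obtain b where "b \<noteq> a"
  proof (rule ccontr)
    assume "\<not> thesis"
    then have "\<forall>b. b = a" using that by blast
    then have "(UNIV :: 'v set) = {a}" by auto
    then have "CARD('v) = card {a}" by (metis)
    then show False using assms by simp
  qed
  obtain p where p: "iswalk w (a # p)" "last (a # p) = b" using path_exists by blast
  then obtain c r where "p = c # r" using \<open>b \<noteq> a\<close> by (cases p) auto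
  then have "w a c > 0" using p by simp
  moreover have "w a c \<le> vdeg w a" unfolding vdeg_def
    by (rule member_le_sum) (auto simp: w_nn)
  ultimately show ?thesis by simp
qed

lemma closed_fix:
  assumes hfix: "\<And>\<gamma>. \<gamma> \<in> first_return_walks w i \<Longrightarrow> walk_prod \<sigma> \<gamma> *v x = x"
  shows "iswalk w (i # r) \<Longrightarrow> last (i # r) = i \<Longrightarrow> walk_prod \<sigma> (i # r) *v x = x"
proof (induction "length r" arbitrary: r rule: less_induct)
  case less
  show ?case
  proof (cases "r = []")
    case True then show ?thesis by simp
  next
    case False
    then have "i \<in> set r" using less.prems(2) by (metis last_ConsR last_in_set)
    then obtain ys zs where r: "r = ys @ i # zs" and ys: "i \<notin> set ys"
      by (meson split_list_first)
    define q1 where "q1 = i # ys @ [i]"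
    define q2 where "q2 = i # zs"
    have eq: "i # r = (i # (ys @ [i])) @ tl q2" by (simp add: r q2_def)
    have lq: "last (i # (ys @ [i])) = hd q2" by (simp add: q2_def)
    have walks: "iswalk w q1 \<and> iswalk w q2"
      using less.prems(1) iswalk_concat[OF lq, of w] eq unfolding q1_def q2_def by simp
    have "q1 \<in> first_return_walks w i"
      unfolding first_return_walks_def
    proof (intro CollectI conjI allI impI)
      show "2 \<le> length q1" "hd q1 = i" "last q1 = i" by (auto simp: q1_def)
      fix l assume "0 < l \<and> l < length q1 - 1"
      then have "q1 ! l = ys ! (l - 1)" "l - 1 < length ys"
        by (auto simp: q1_def nth_Cons' nth_append)
      then show "q1 ! l \<noteq> i" using ys by (metis nth_mem)
    next
      fix l assume "l + 1 < length q1"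
      then show "0 < w (q1 ! l) (q1 ! (l + 1))" using walks iswalk_nth by blast
    qed
    then have f1: "walk_prod \<sigma> q1 *v x = x" by (rule hfix)
    have "length zs < length r" by (simp add: r)
    moreover have "last (i # zs) = i" using less.prems(2) by (simp add: r)
    ultimately have f2: "walk_prod \<sigma> q2 *v x = x" using less.hyps walks unfolding q2_def by blast
    have "walk_prod \<sigma> (i # r) = walk_prod \<sigma> q1 ** walk_prod \<sigma> q2"
      unfolding eq q1_def by (rule walk_prod_concat[OF lq]) (simp add: q2_def)
    then show ?thesis using f1 f2 by (simp add: matrix_vector_mul_assoc[symmetric])
  qed
qed

end

context
  fixes w :: "'v::finite \<Rightarrow> 'v \<Rightarrow> real" and \<sigma> :: "'v \<Rightarrow> 'v \<Rightarrow> real^'d::finite^'d"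
  assumes cg: "connection_graph w \<sigma>"
begin

lemma walk_welldef:
  assumes hfix: "\<And>\<gamma>. \<gamma> \<in> first_return_walks w i \<Longrightarrow> walk_prod \<sigma> \<gamma> *v x = x"
    and p: "iswalk w (a # p)" "last (a # p) = i"
    and p': "iswalk w (a # p')" "last (a # p') = i"
  shows "walk_prod \<sigma> (a # p) *v x = walk_prod \<sigma> (a # p') *v x"
proof -
  obtain \<alpha> where \<alpha>: "iswalk w (i # \<alpha>)" "last (i # \<alpha>) = a" using path_exists[OF cg] by blast
  have key: "walk_prod \<sigma> (i # \<alpha>) *v (walk_prod \<sigma> (a # q) *v x) = x"
    if q: "iswalk w (a # q)" "last (a # q) = i" for q
  proof -
    have l: "last (i # \<alpha>) = hd (a # q)" using \<alpha> by simp
    have e: "(i # \<alpha>) @ tl (a # q) = i # (\<alpha> @ q)" by simp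
    have wk: "iswalk w (i # (\<alpha> @ q))" using iswalk_concat[OF l, of w] \<alpha> q e by simp
    have la: "last (i # (\<alpha> @ q)) = i"
      using \<alpha> q by (cases q) auto
    have "walk_prod \<sigma> (i # (\<alpha> @ q)) *v x = x"
      by (rule closed_fix[OF cg hfix wk la])
    moreover have "walk_prod \<sigma> (i # (\<alpha> @ q)) = walk_prod \<sigma> (i # \<alpha>) ** walk_prod \<sigma> (a # q)"
      using walk_prod_concat[OF l, of \<sigma>] e by simp
    ultimately show ?thesis by (simp add: matrix_vector_mul_assoc)
  qed
  have o: "orthogonal_matrix (walk_prod \<sigma> (i # \<alpha>))" using walk_orth[OF cg \<alpha>(1)] .
  show ?thesis using key[OF p] key[OF p'] orth_inj[OF o] by metis
qed

lemma fix_section: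
  assumes hfix: "\<And>\<gamma>. \<gamma> \<in> first_return_walks w i \<Longrightarrow> walk_prod \<sigma> \<gamma> *v x = x"
    and x0: "x \<noteq> 0"
  shows "\<exists>F. F i \<noteq> 0 \<and> (\<forall>a b. w a b > 0 \<longrightarrow> F a = \<sigma> a b *v F b)"
proof -
  define P where "P a = (SOME p. iswalk w (a # p) \<and> last (a # p) = i)" for a
  have P: "iswalk w (a # P a) \<and> last (a # P a) = i" for a
    unfolding P_def by (rule someI_ex) (rule path_exists[OF cg])
  define F where "F a = walk_prod \<sigma> (a # P a) *v x" for a
  have "F i = x" unfolding F_def using closed_fix[OF cg hfix] P by blast
  moreover have "F a = \<sigma> a b *v F b" if ab: "w a b > 0" for a b
  proof -
    have wk: "iswalk w (a # (b # P b))" "last (a # (b # P b)) = i" using P[of b] ab by auto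
    have "F a = walk_prod \<sigma> (a # (b # P b)) *v x"
      unfolding F_def using walk_welldef[OF hfix _ _ wk] P[of a] by blast
    also have "\<dots> = \<sigma> a b *v F b" by (simp add: F_def matrix_vector_mul_assoc)
    finally show ?thesis .
  qed
  ultimately show ?thesis using x0 by (intro exI[of _ F]) auto
qed

lemma section_walk:
  assumes cons: "\<And>a b. w a b > 0 \<Longrightarrow> F a = \<sigma> a b *v F b"
  shows "iswalk w (a # p) \<Longrightarrow> F a = walk_prod \<sigma> (a # p) *v F (last (a # p))"
proof (induction p arbitrary: a)
  case Nil then show ?case by simp
next
  case (Cons b p)
  then have "F b = walk_prod \<sigma> (b # p) *v F (last (b # p))" by simp
  moreover have "F a = \<sigma> a b *v F b" using Cons.prems cons by simp
  ultimately show ?case by (simp add: matrix_vector_mul_assoc)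
qed

end

definition Fv :: "real^('v::finite \<times> 'd::finite) \<Rightarrow> 'v \<Rightarrow> real^'d" where
  "Fv f a = (\<chi> k. f $ (a, k))"

context
  fixes w :: "'v::finite \<Rightarrow> 'v \<Rightarrow> real" and \<sigma> :: "'v \<Rightarrow> 'v \<Rightarrow> real^'d::finite^'d"
  assumes cg: "connection_graph w \<sigma>"
begin

lemma lap_row:
  "Fv (conn_laplacian w \<sigma> *v f) a = vdeg w a *\<^sub>R Fv f a - (\<Sum>b\<in>UNIV. w a b *\<^sub>R (\<sigma> a b *v Fv f b))"
proof (subst vec_eq_iff, intro allI)
  fix k
  let ?L = "conn_laplacian w \<sigma>"
  have "(?L *v f) $ (a, k) = (\<Sum>q\<in>UNIV. ?L $ (a, k) $ q * f $ q)"
    by (simp add: matrix_vector_mult_def)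
  also have "\<dots> = (\<Sum>b\<in>UNIV. \<Sum>l\<in>UNIV. ?L $ (a, k) $ (b, l) * f $ (b, l))"
    by (simp add: sum.cartesian_product UNIV_Times_UNIV[symmetric] del: UNIV_Times_UNIV)
  also have "\<dots> = (\<Sum>b\<in>UNIV. (if b = a then vdeg w a * f $ (a, k) else 0)
                       - w a b * (\<Sum>l\<in>UNIV. \<sigma> a b $ k $ l * f $ (b, l)))"
  proof (rule sum.cong[OF refl])
    fix b
    show "(\<Sum>l\<in>UNIV. ?L $ (a, k) $ (b, l) * f $ (b, l)) = (if b = a then vdeg w a * f $ (a, k) else 0)
                       - w a b * (\<Sum>l\<in>UNIV. \<sigma> a b $ k $ l * f $ (b, l))"
    proof (cases "b = a")
      case True
      then show ?thesis by (simp add: conn_laplacian_def w_diag[OF cg] if_distrib[of "\<lambda>x. x * _"] cong: if_cong)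
    next
      case False
      show ?thesis
      proof (cases "w a b > 0")
        case True
        then show ?thesis using False by (simp add: conn_laplacian_def sum_distrib_left sum_negf algebra_simps)
      next
        case nb: False
        then have "w a b = 0" using w_nn[OF cg, of a b] by simp
        then show ?thesis using False by (simp add: conn_laplacian_def)
      qed
    qed
  qed
  also have "\<dots> = vdeg w a * f $ (a, k) - (\<Sum>b\<in>UNIV. w a b * (\<Sum>l\<in>UNIV. \<sigma> a b $ k $ l * f $ (b, l)))"
    by (simp add: sum_subtractf)
  finally show "Fv (?L *v f) a $ k = (vdeg w a *\<^sub>R Fv f a - (\<Sum>b\<in>UNIV. w a b *\<^sub>R (\<sigma> a b *v Fv f b))) $ k"
    by (simp add: Fv_def matrix_vector_mult_def)
qed

lemma Fv_zero: "Fv 0 a = 0" by (simp add: Fv_def vec_eq_iff)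

lemma quad_form:
  "(\<Sum>a\<in>UNIV. Fv f a \<bullet> Fv (conn_laplacian w \<sigma> *v f) a)
     = (\<Sum>a\<in>UNIV. \<Sum>b\<in>UNIV. w a b * (norm (Fv f a - \<sigma> a b *v Fv f b))^2) / 2"
proof -
  define F where "F = Fv f"
  have t: "w a b * (norm (F a - \<sigma> a b *v F b))^2
        = w a b * (norm (F a))^2 + w a b * (norm (F b))^2 - 2 * (w a b * (F a \<bullet> (\<sigma> a b *v F b)))" for a b
  proof (cases "w a b > 0")
    case True
    have "(norm (F a - \<sigma> a b *v F b))^2 = (norm (F a))^2 - 2 * (F a \<bullet> (\<sigma> a b *v F b)) + (norm (\<sigma> a b *v F b))^2"
      by (simp add: power2_norm_eq_inner inner_diff_left inner_diff_right inner_commute)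
    then have "(norm (F a - \<sigma> a b *v F b))^2 = (norm (F a))^2 + (norm (F b))^2 - 2 * (F a \<bullet> (\<sigma> a b *v F b))"
      using orth_norm[OF orth[OF cg True], of "F b"] by simp
    then show ?thesis by (simp add: right_diff_distrib distrib_left)
  next
    case False
    then have "w a b = 0" using w_nn[OF cg, of a b] by simp
    then show ?thesis by simp
  qed
  have s1: "(\<Sum>a\<in>UNIV. \<Sum>b\<in>UNIV. w a b * (norm (F a))^2) = (\<Sum>a\<in>UNIV. vdeg w a * (norm (F a))^2)"
    by (simp add: vdeg_def sum_distrib_right)
  have s2: "(\<Sum>a\<in>UNIV. \<Sum>b\<in>UNIV. w a b * (norm (F b))^2) = (\<Sum>a\<in>UNIV. vdeg w a * (norm (F a))^2)"
    apply (subst sum.swap)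
    by (simp add: vdeg_def sum_distrib_right w_sym[OF cg])
  have "(\<Sum>a\<in>UNIV. \<Sum>b\<in>UNIV. w a b * (norm (F a - \<sigma> a b *v F b))^2)
     = 2 * (\<Sum>a\<in>UNIV. vdeg w a * (norm (F a))^2) - 2 * (\<Sum>a\<in>UNIV. \<Sum>b\<in>UNIV. w a b * (F a \<bullet> (\<sigma> a b *v F b)))"
    unfolding t by (simp add: sum.distrib sum_subtractf s1 s2 sum_distrib_left)
  moreover have "(\<Sum>a\<in>UNIV. F a \<bullet> Fv (conn_laplacian w \<sigma> *v f) a)
     = (\<Sum>a\<in>UNIV. vdeg w a * (norm (F a))^2) - (\<Sum>a\<in>UNIV. \<Sum>b\<in>UNIV. w a b * (F a \<bullet> (\<sigma> a b *v F b)))"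
    unfolding lap_row F_def[symmetric]
    by (simp add: inner_diff_right inner_sum_right power2_norm_eq_inner sum_subtractf)
  ultimately show ?thesis unfolding F_def by simp
qed

lemma ker_cons:
  assumes "conn_laplacian w \<sigma> *v f = 0" "w a b > 0"
  shows "Fv f a = \<sigma> a b *v Fv f b"
proof -
  let ?g = "\<lambda>a b. w a b * (norm (Fv f a - \<sigma> a b *v Fv f b))^2"
  have nn: "?g a b \<ge> 0" for a b using w_nn[OF cg, of a b] by simp
  have "(\<Sum>a\<in>UNIV. \<Sum>b\<in>UNIV. ?g a b) = 0"
    using quad_form[of f] assms(1) by (simp add: Fv_zero)
  then have "\<forall>a\<in>UNIV. (\<Sum>b\<in>UNIV. ?g a b) = 0"
    by (subst sum_nonneg_eq_0_iff[symmetric]) (auto intro: sum_nonneg nn)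
  then have "\<forall>b\<in>UNIV. ?g a b = 0"
    by (subst sum_nonneg_eq_0_iff[symmetric]) (auto intro: nn)
  then have "?g a b = 0" by simp
  then show ?thesis using assms(2) by simp
qed

lemma cons_ker:
  assumes cons: "\<And>a b. w a b > 0 \<Longrightarrow> F a = \<sigma> a b *v F b"
  shows "conn_laplacian w \<sigma> *v (\<chi> p. F (fst p) $ snd p) = 0"
proof -
  define f where "f = (\<chi> p. F (fst p) $ snd p)"
  have Ff: "Fv f = F" by (rule ext) (simp add: Fv_def f_def vec_eq_iff)
  have "Fv (conn_laplacian w \<sigma> *v f) a = 0" for a
  proof -
    have eqb: "w a b *\<^sub>R (\<sigma> a b *v F b) = w a b *\<^sub>R F a" for b
    proof (cases "w a b > 0")
      case True then show ?thesis using cons by simp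
    next
      case False then have "w a b = 0" using w_nn[OF cg, of a b] by simp
      then show ?thesis by simp
    qed
    have "(\<Sum>b\<in>UNIV. w a b *\<^sub>R (\<sigma> a b *v F b)) = vdeg w a *\<^sub>R F a"
      by (simp add: eqb vdeg_def scaleR_sum_left)
    then show ?thesis unfolding lap_row Ff by simp
  qed
  then show ?thesis unfolding f_def[symmetric]
    by (subst vec_eq_iff) (auto simp: Fv_def vec_eq_iff)
qed

lemma invertible_iff_sections:
  "invertible (conn_laplacian w \<sigma>) \<longleftrightarrow> \<not> (\<exists>F a. F a \<noteq> 0 \<and> (\<forall>a b. w a b > 0 \<longrightarrow> F a = \<sigma> a b *v F b))"
proof -
  have "invertible (conn_laplacian w \<sigma>) \<longleftrightarrow> (\<forall>x. conn_laplacian w \<sigma> *v x = 0 \<longrightarrow> x = 0)"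
    by (simp add: invertible_left_inverse matrix_left_invertible_ker)
  also have "\<dots> \<longleftrightarrow> \<not> (\<exists>F a. F a \<noteq> 0 \<and> (\<forall>a b. w a b > 0 \<longrightarrow> F a = \<sigma> a b *v F b))"
  proof
    assume H: "\<forall>x. conn_laplacian w \<sigma> *v x = 0 \<longrightarrow> x = 0"
    show "\<not> (\<exists>F a. F a \<noteq> 0 \<and> (\<forall>a b. w a b > 0 \<longrightarrow> F a = \<sigma> a b *v F b))"
    proof
      assume "\<exists>F a. F a \<noteq> 0 \<and> (\<forall>a b. w a b > 0 \<longrightarrow> F a = \<sigma> a b *v F b)"
      then obtain F a where Fa: "F a \<noteq> 0" and c: "\<forall>a b. w a b > 0 \<longrightarrow> F a = \<sigma> a b *v F b" by blast
      have "(\<chi> p. F (fst p) $ snd p) = 0" using H cons_ker[of F] c by blast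
      then have "F a $ k = 0" for k by (metis (no_types) fst_conv snd_conv vec_lambda_beta zero_index)
      then show False using Fa by (simp add: vec_eq_iff)
    qed
  next
    assume H: "\<not> (\<exists>F a. F a \<noteq> 0 \<and> (\<forall>a b. w a b > 0 \<longrightarrow> F a = \<sigma> a b *v F b))"
    show "\<forall>x. conn_laplacian w \<sigma> *v x = 0 \<longrightarrow> x = 0"
    proof (intro allI impI)
      fix x assume x: "conn_laplacian w \<sigma> *v x = 0"
      then have "\<forall>a. Fv x a = 0" using H ker_cons[OF x] by blast
      then show "x = 0" by (auto simp: vec_eq_iff Fv_def)
    qed
  qed
  finally show ?thesis .
qed

end

fun hh :: "('v::finite \<Rightarrow> 'v \<Rightarrow> real) \<Rightarrow> 'v \<Rightarrow> nat \<Rightarrow> 'v \<Rightarrow> real" where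
  "hh w i 0 a = 1"
| "hh w i (Suc m) a = (\<Sum>b\<in>UNIV. if b = i then 0 else w a b / vdeg w a * hh w i m b)"

fun gg :: "('v::finite \<Rightarrow> 'v \<Rightarrow> real) \<Rightarrow> 'v \<Rightarrow> nat \<Rightarrow> 'v \<Rightarrow> real" where
  "gg w i 0 a = w a i / vdeg w a"
| "gg w i (Suc m) a = (\<Sum>b\<in>UNIV. if b = i then 0 else w a b / vdeg w a * gg w i m b)"

declare hh.simps(2)[simp del] gg.simps(2)[simp del]

lemma sum_if_neq:
  fixes X :: "'v::finite \<Rightarrow> real"
  shows "(\<Sum>b\<in>UNIV. if b = i then 0 else X b) = (\<Sum>b\<in>UNIV. X b) - X i"
proof -
  have "(\<Sum>b\<in>UNIV. if b = i then 0 else X b) = (\<Sum>b\<in>UNIV. X b - (if b = i then X b else 0))"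
    by (rule sum.cong) auto
  also have "\<dots> = (\<Sum>b\<in>UNIV. X b) - X i" by (simp add: sum_subtractf)
  finally show ?thesis .
qed

context
  fixes w :: "'v::finite \<Rightarrow> 'v \<Rightarrow> real" and \<sigma> :: "'v \<Rightarrow> 'v \<Rightarrow> real^'d::finite^'d"
  assumes cg: "connection_graph w \<sigma>" and card2: "CARD('v) \<ge> 2"
begin

lemma P_sum: "(\<Sum>b\<in>UNIV. w a b / vdeg w a) = 1"
  using deg_pos[OF cg card2, of a] by (simp add: sum_divide_distrib[symmetric] vdeg_def)

lemma P_nn: "w a b / vdeg w a \<ge> 0"
  using deg_pos[OF cg card2, of a] w_nn[OF cg, of a b] by simp

lemma hh_nn: "hh w i m a \<ge> 0"
proof (induction m arbitrary: a)
  case (Suc m)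
  show ?case
    unfolding hh.simps
    apply (rule sum_nonneg)
    apply (split if_split, intro conjI impI)
     apply simp
    apply (rule mult_nonneg_nonneg[OF P_nn Suc.IH])
    done
qed simp

lemma hh_dec: "hh w i (Suc m) a \<le> hh w i m a"
proof (induction m arbitrary: a)
  case 0
  have "(\<Sum>b\<in>UNIV. if b = i then 0 else w a b / vdeg w a * hh w i 0 b) \<le> (\<Sum>b\<in>UNIV. w a b / vdeg w a)"
    by (rule sum_mono) (auto simp: P_nn)
  then show ?case using P_sum[of a] by (simp only: hh.simps)
next
  case (Suc m)
  have "hh w i (Suc (Suc m)) a \<le> (\<Sum>b\<in>UNIV. if b = i then 0 else w a b / vdeg w a * hh w i m b)"
    unfolding hh.simps(2)[of w i "Suc m"]
    apply (rule sum_mono)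
    using mult_left_mono[OF Suc.IH P_nn] by simp
  then show ?case by (simp only: hh.simps(2)[of w i m])
qed

lemma hh_gg: "hh w i m a = gg w i m a + hh w i (Suc m) a"
proof (induction m arbitrary: a)
  case 0
  show ?case using P_sum[of a] by (simp add: sum_if_neq hh.simps(2))
next
  case (Suc m)
  have e: "(if b = i then 0 else w a b / vdeg w a * hh w i m b)
     = (if b = i then 0 else w a b / vdeg w a * gg w i m b)
       + (if b = i then 0 else w a b / vdeg w a * hh w i (Suc m) b)" for b
    using Suc[of b] by (simp add: distrib_left)
  have "hh w i (Suc m) a = (\<Sum>b\<in>UNIV. if b = i then 0 else w a b / vdeg w a * hh w i m b)"
    by (rule hh.simps(2))
  also have "\<dots> = (\<Sum>b\<in>UNIV. if b = i then 0 else w a b / vdeg w a * gg w i m b)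
       + (\<Sum>b\<in>UNIV. if b = i then 0 else w a b / vdeg w a * hh w i (Suc m) b)"
    unfolding e by (rule sum.distrib)
  also have "\<dots> = gg w i (Suc m) a + hh w i (Suc (Suc m)) a"
    by (simp only: gg.simps(2) hh.simps(2)[of w i "Suc m"])
  finally show ?case .
qed

lemma gg_tele: "(\<Sum>k<M. gg w i k a) = 1 - hh w i M a"
proof (induction M)
  case (Suc M)
  then show ?case using hh_gg[of i M a] by simp
qed simp

lemma hh_lim: "(\<lambda>m. hh w i m a) \<longlonglongrightarrow> 0"
proof -
  have "\<exists>L. (\<lambda>m. hh w i m a) \<longlonglongrightarrow> L" for a
  proof -
    have "decseq (\<lambda>m. hh w i m a)" by (rule decseq_SucI) (rule hh_dec)
    then obtain L where "(\<lambda>m. hh w i m a) \<longlonglongrightarrow> L"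
      by (rule decseq_convergent[where B = 0]) (auto simp: hh_nn)
    then show ?thesis by blast
  qed
  then obtain H where H: "\<And>a. (\<lambda>m. hh w i m a) \<longlonglongrightarrow> H a" by metis
  have Hnn: "H a \<ge> 0" for a
    by (rule LIMSEQ_le_const[OF H]) (auto simp: hh_nn)
  have Heq: "H a = (\<Sum>b\<in>UNIV. if b = i then 0 else w a b / vdeg w a * H b)" for a
  proof -
    have tb: "(\<lambda>m. if b = i then 0 else w a b / vdeg w a * hh w i m b) \<longlonglongrightarrow> (if b = i then 0 else w a b / vdeg w a * H b)" for b
    proof (cases "b = i")
      case True then show ?thesis by simp
    next
      case False then show ?thesis using tendsto_mult_left[OF H, of "w a b / vdeg w a" b] by simp
    qed
    moreover have "(\<lambda>m. hh w i (Suc m) a) \<longlonglongrightarrow> (\<Sum>b\<in>UNIV. if b = i then 0 else w a b / vdeg w a * H b)"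
      unfolding hh.simps(2)
      by (rule tendsto_sum) (rule tb)
    moreover have "(\<lambda>m. hh w i (Suc m) a) \<longlonglongrightarrow> H a" using H LIMSEQ_Suc by blast
    ultimately show ?thesis using LIMSEQ_unique by blast
  qed
  define M where "M = Max (range H)"
  have HM: "H a \<le> M" for a unfolding M_def by simp
  have "M \<in> range H" unfolding M_def by (rule Max_in) auto
  then obtain a0 where a0: "H a0 = M" by auto
  have "M \<le> 0"
  proof (rule ccontr)
    assume "\<not> M \<le> 0"
    then have Mpos: "M > 0" by simp
    have hprop: "H b = M \<and> b \<noteq> i" if a: "H a = M" and ab: "w a b > 0" for a b
    proof -
      define H' where "H' b = (if b = i then 0 else H b)" for b
      have H'M: "H' b \<le> M" for b unfolding H'_def using HM[of b] Mpos by auto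
      have e1: "(\<Sum>b\<in>UNIV. w a b / vdeg w a * H' b) = H a"
        unfolding Heq[of a] H'_def by (rule sum.cong) auto
      have e2: "(\<Sum>b\<in>UNIV. w a b / vdeg w a * M) = M"
        using P_sum[of a] by (simp only: sum_distrib_right[symmetric] mult_1)
      have "(\<Sum>b\<in>UNIV. w a b / vdeg w a * (M - H' b)) = M - H a"
        by (simp only: right_diff_distrib sum_subtractf e1 e2)
      also have "\<dots> = 0" using a by simp
      finally have s0: "(\<Sum>b\<in>UNIV. w a b / vdeg w a * (M - H' b)) = 0" .
      have nnt: "0 \<le> w a b / vdeg w a * (M - H' b)" for b
        by (rule mult_nonneg_nonneg[OF P_nn]) (simp add: H'M)
      have "\<forall>b\<in>UNIV. w a b / vdeg w a * (M - H' b) = 0"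
        using sum_nonneg_eq_0_iff[OF finite_class.finite_UNIV, of "\<lambda>b. w a b / vdeg w a * (M - H' b)"] nnt s0 by blast
      then have "w a b / vdeg w a * (M - H' b) = 0" by simp
      moreover have "w a b / vdeg w a > 0" using ab deg_pos[OF cg card2, of a] by simp
      ultimately have "H' b = M" by (metis divide_eq_0_iff less_irrefl mult_eq_0_iff right_minus_eq)
      then show ?thesis using Mpos unfolding H'_def by (auto split: if_splits)
    qed
    have all: "H b = M" for b
      using conn[OF cg, of a0 b]
    proof (induction rule: rtrancl_induct)
      case base then show ?case using a0 .
    next
      case (step y z) then show ?case using hprop by blast
    qed
    obtain c where "w i c > 0"
    proof -
      have "0 < vdeg w i" using deg_pos[OF cg card2] .
      then have "\<exists>c. w i c \<noteq> 0" unfolding vdeg_def by (metis (no_types) sum.neutral less_irrefl)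
      then show ?thesis using that w_nn[OF cg] by (metis less_eq_real_def)
    qed
    then have "w c i > 0" using w_sym[OF cg] by simp
    then show False using hprop[OF all[of c] \<open>w c i > 0\<close>] by simp
  qed
  then have "H a = 0" using HM[of a] Hnn[of a] by simp
  then show ?thesis using H[of a] by simp
qed

lemma gg_sums: "(\<lambda>M. \<Sum>k<M. gg w i k a) \<longlonglongrightarrow> 1"
proof -
  have "(\<lambda>M. 1 - hh w i M a) \<longlonglongrightarrow> 1 - 0" by (intro tendsto_intros hh_lim)
  then show ?thesis by (simp add: gg_tele)
qed

end

definition Bs :: "('v::finite \<Rightarrow> 'v \<Rightarrow> real) \<Rightarrow> 'v \<Rightarrow> nat \<Rightarrow> 'v \<Rightarrow> 'v list set" where
  "Bs w i m a = {\<gamma>. length \<gamma> = m + 2 \<and> hd \<gamma> = a \<and> \<gamma> ! (m + 1) = i \<and>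
      (\<forall>l. 0 < l \<and> l \<le> m \<longrightarrow> \<gamma> ! l \<noteq> i) \<and> iswalk w \<gamma>}"

lemma Bs_finite: "finite (Bs w i m a)"
  by (rule finite_subset[OF _ finite_lists_length_eq[of UNIV "m+2"]]) (auto simp: Bs_def)

lemma Bs_0: "Bs w i 0 a = (if w a i > 0 then {[a, i]} else {})"
proof -
  have "\<gamma> \<in> Bs w i 0 a \<longleftrightarrow> \<gamma> = [a, i] \<and> w a i > 0" for \<gamma>
  proof
    assume "\<gamma> \<in> Bs w i 0 a"
    then have h: "length \<gamma> = 2" "hd \<gamma> = a" "\<gamma> ! 1 = i" "iswalk w \<gamma>" unfolding Bs_def by auto
    have "\<exists>x y. \<gamma> = [x, y]" using h(1) by (auto simp: length_Suc_conv numeral_2_eq_2)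
    then obtain x y where "\<gamma> = [x, y]" by blast
    then show "\<gamma> = [a, i] \<and> w a i > 0" using h by simp
  next
    assume "\<gamma> = [a, i] \<and> w a i > 0"
    then show "\<gamma> \<in> Bs w i 0 a" unfolding Bs_def by simp
  qed
  then show ?thesis by auto
qed

lemma Bs_Suc: "Bs w i (Suc m) a = (\<Union>b\<in>{b. b \<noteq> i \<and> w a b > 0}. Cons a ` Bs w i m b)"
proof (intro set_eqI iffI)
  fix \<gamma> assume g: "\<gamma> \<in> Bs w i (Suc m) a"
  then have h: "length \<gamma> = m + 3" "hd \<gamma> = a" "\<gamma> ! (m + 2) = i"
      "\<And>l. 0 < l \<Longrightarrow> l \<le> Suc m \<Longrightarrow> \<gamma> ! l \<noteq> i" "iswalk w \<gamma>"
    unfolding Bs_def by auto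
  have "\<exists>x b t. \<gamma> = x # b # t" using h(1) by (auto simp: length_Suc_conv numeral_3_eq_3)
  then obtain x b t where "\<gamma> = x # b # t" by blast
  then have gt: "\<gamma> = a # b # t" using h(2) by simp
  have bi: "b \<noteq> i" using h(4)[of 1] gt by simp
  have wab: "w a b > 0" using h(5) gt by simp
  have "b # t \<in> Bs w i m b"
    unfolding Bs_def
  proof (intro CollectI conjI allI impI)
    show "length (b # t) = m + 2" using h(1) gt by simp
    show "hd (b # t) = b" by simp
    show "(b # t) ! (m + 1) = i" using h(3) gt by simp
    show "iswalk w (b # t)" using h(5) gt by simp
    fix l assume "0 < l \<and> l \<le> m"
    then show "(b # t) ! l \<noteq> i" using h(4)[of "Suc l"] gt by simp
  qed
  then show "\<gamma> \<in> (\<Union>b\<in>{b. b \<noteq> i \<and> w a b > 0}. Cons a ` Bs w i m b)"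
    using gt bi wab by blast
next
  fix \<gamma> assume "\<gamma> \<in> (\<Union>b\<in>{b. b \<noteq> i \<and> w a b > 0}. Cons a ` Bs w i m b)"
  then obtain b t where bi: "b \<noteq> i" and wab: "w a b > 0" and t: "t \<in> Bs w i m b" and gt: "\<gamma> = a # t"
    by blast
  then have h: "length t = m + 2" "hd t = b" "t ! (m + 1) = i"
      "\<And>l. 0 < l \<Longrightarrow> l \<le> m \<Longrightarrow> t ! l \<noteq> i" "iswalk w t"
    unfolding Bs_def by auto
  then obtain t' where tt: "t = b # t'" by (cases t) auto
  show "\<gamma> \<in> Bs w i (Suc m) a"
    unfolding Bs_def
  proof (intro CollectI conjI allI impI)
    show "length \<gamma> = Suc m + 2" using h(1) gt by simp
    show "hd \<gamma> = a" using gt by simp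
    show "\<gamma> ! (Suc m + 1) = i" using h(3) gt by simp
    show "iswalk w \<gamma>" using h(5) gt tt wab by simp
    fix l assume l: "0 < l \<and> l \<le> Suc m"
    show "\<gamma> ! l \<noteq> i"
    proof (cases "l = 1")
      case True then show ?thesis using gt tt bi by simp
    next
      case False
      then obtain l' where "l = Suc l'" "0 < l'" "l' \<le> m" using l by (cases l) auto
      then show ?thesis using h(4)[of l'] gt by simp
    qed
  qed
qed

lemma walk_prob_Cons: "t \<noteq> [] \<Longrightarrow> walk_prob w (a # t) = w a (hd t) / vdeg w a * walk_prob w t"
  by (cases t) auto

lemma walk_prob_nn: "(\<And>a b. w a b \<ge> 0) \<Longrightarrow> walk_prob w p \<ge> 0"
proof (induction p rule: induct_list012)
  case (3 x y zs)
  then show ?case by (simp add: vdeg_def sum_nonneg)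
qed auto

context
  fixes w :: "'v::finite \<Rightarrow> 'v \<Rightarrow> real" and \<sigma> :: "'v \<Rightarrow> 'v \<Rightarrow> real^'d::finite^'d"
  assumes cg: "connection_graph w \<sigma>" and card2: "CARD('v) \<ge> 2"
begin

lemma Bs_sum: "(\<Sum>\<gamma>\<in>Bs w i m a. walk_prob w \<gamma>) = gg w i m a"
proof (induction m arbitrary: a)
  case 0
  show ?case
  proof (cases "w a i > 0")
    case True then show ?thesis by (simp add: Bs_0)
  next
    case False
    then have "w a i = 0" using w_nn[OF cg, of a i] by simp
    then show ?thesis by (simp add: Bs_0)
  qed
next
  case (Suc m)
  let ?B = "{b. b \<noteq> i \<and> w a b > 0}"
  have "(\<Sum>\<gamma>\<in>Bs w i (Suc m) a. walk_prob w \<gamma>) = (\<Sum>b\<in>?B. \<Sum>\<gamma>\<in>Cons a ` Bs w i m b. walk_prob w \<gamma>)"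
    unfolding Bs_Suc
    apply (rule sum.UNION_disjoint)
      apply simp
     apply (simp add: Bs_finite)
    apply (auto simp: Bs_def)
    done
  also have "\<dots> = (\<Sum>b\<in>?B. \<Sum>t\<in>Bs w i m b. walk_prob w (a # t))"
    by (rule sum.cong[OF refl]) (simp add: sum.reindex)
  also have "\<dots> = (\<Sum>b\<in>?B. \<Sum>t\<in>Bs w i m b. w a b / vdeg w a * walk_prob w t)"
  proof (intro sum.cong[OF refl])
    fix b t assume "t \<in> Bs w i m b"
    then have "t \<noteq> []" "hd t = b" unfolding Bs_def by auto
    then show "walk_prob w (a # t) = w a b / vdeg w a * walk_prob w t" using walk_prob_Cons by metis
  qed
  also have "\<dots> = (\<Sum>b\<in>?B. w a b / vdeg w a * gg w i m b)"
    by (rule sum.cong[OF refl]) (simp only: sum_distrib_left[symmetric] Suc)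
  also have "\<dots> = (\<Sum>b\<in>UNIV. if b \<noteq> i \<and> w a b > 0 then w a b / vdeg w a * gg w i m b else 0)"
    using sum.inter_filter[of UNIV "\<lambda>b. w a b / vdeg w a * gg w i m b" "\<lambda>b. b \<noteq> i \<and> w a b > 0"]
    by simp
  also have "\<dots> = gg w i (Suc m) a"
    unfolding gg.simps(2)
  proof (rule sum.cong[OF refl])
    fix b
    show "(if b \<noteq> i \<and> w a b > 0 then w a b / vdeg w a * gg w i m b else 0)
        = (if b = i then 0 else w a b / vdeg w a * gg w i m b)"
      using w_nn[OF cg, of a b] by auto
  qed
  finally show ?case .
qed

lemma FRW_len: "\<gamma> \<in> first_return_walks w i \<Longrightarrow> length \<gamma> \<ge> 2"
  unfolding first_return_walks_def by auto

lemma FRW_Bs: "first_return_walks w i \<inter> {\<gamma>. length \<gamma> = m + 2} = Bs w i m i"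
proof (intro set_eqI iffI)
  fix \<gamma> assume "\<gamma> \<in> first_return_walks w i \<inter> {\<gamma>. length \<gamma> = m + 2}"
  then have h: "length \<gamma> = m + 2" "hd \<gamma> = i" "last \<gamma> = i"
    "\<And>l. 0 < l \<Longrightarrow> l < length \<gamma> - 1 \<Longrightarrow> \<gamma> ! l \<noteq> i"
    "\<forall>l. l + 1 < length \<gamma> \<longrightarrow> w (\<gamma> ! l) (\<gamma> ! (l + 1)) > 0"
    unfolding first_return_walks_def by auto
  have "\<gamma> \<noteq> []" using h(1) by auto
  then have "\<gamma> ! (m + 1) = i" using h(1,3) by (simp add: last_conv_nth)
  then show "\<gamma> \<in> Bs w i m i" unfolding Bs_def using h iswalk_nth[of w \<gamma>] by auto
next
  fix \<gamma> assume "\<gamma> \<in> Bs w i m i"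
  then have h: "length \<gamma> = m + 2" "hd \<gamma> = i" "\<gamma> ! (m + 1) = i"
    "\<And>l. 0 < l \<Longrightarrow> l \<le> m \<Longrightarrow> \<gamma> ! l \<noteq> i" "iswalk w \<gamma>"
    unfolding Bs_def by auto
  have "\<gamma> \<noteq> []" using h(1) by auto
  then have "last \<gamma> = i" using h(1,3) by (simp add: last_conv_nth)
  then show "\<gamma> \<in> first_return_walks w i \<inter> {\<gamma>. length \<gamma> = m + 2}"
    unfolding first_return_walks_def using h iswalk_nth[of w \<gamma>] by auto
qed

lemma U_sum: "(\<Sum>\<gamma>\<in>(\<Union>m<M. Bs w i m i). walk_prob w \<gamma>) = 1 - hh w i M i"
proof -
  have "(\<Sum>\<gamma>\<in>(\<Union>m<M. Bs w i m i). walk_prob w \<gamma>) = (\<Sum>m<M. \<Sum>\<gamma>\<in>Bs w i m i. walk_prob w \<gamma>)"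
    apply (rule sum.UNION_disjoint)
      apply simp
     apply (simp add: Bs_finite)
    apply (auto simp: Bs_def)
    done
  also have "\<dots> = 1 - hh w i M i" by (simp add: Bs_sum gg_tele[OF cg card2])
  finally show ?thesis .
qed

lemma FRW_has_sum: "(walk_prob w has_sum 1) (first_return_walks w i)"
proof -
  let ?A = "first_return_walks w i"
  have nn: "walk_prob w \<gamma> \<ge> 0" for \<gamma> using walk_prob_nn w_nn[OF cg] by blast
  have U_sub: "(\<Union>m<M. Bs w i m i) \<subseteq> ?A" for M using FRW_Bs by blast
  have U_fin: "finite (\<Union>m<M. Bs w i m i)" for M by (simp add: Bs_finite)
  have bound: "sum (walk_prob w) F \<le> 1" if F: "F \<subseteq> ?A" "finite F" for F
  proof -
    define M where "M = Suc (Max (length ` F))"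
    have "F \<subseteq> (\<Union>m<M. Bs w i m i)"
    proof
      fix \<gamma> assume g: "\<gamma> \<in> F"
      then have "length \<gamma> \<ge> 2" using F FRW_len by blast
      moreover have "length \<gamma> \<le> Max (length ` F)" using g F(2) by simp
      ultimately have "length \<gamma> - 2 < M" "length \<gamma> = (length \<gamma> - 2) + 2" unfolding M_def by auto
      then show "\<gamma> \<in> (\<Union>m<M. Bs w i m i)" using FRW_Bs[of i "length \<gamma> - 2"] g F(1) by blast
    qed
    then have "sum (walk_prob w) F \<le> sum (walk_prob w) (\<Union>m<M. Bs w i m i)"
      by (intro sum_mono2 U_fin nn)
    also have "\<dots> \<le> 1" using U_sum hh_nn[OF cg card2] by (simp add: U_sum)
    finally show ?thesis .
  qed
  have bdd: "bdd_above (sum (walk_prob w) ` {F. F \<subseteq> ?A \<and> finite F})"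
    using bound by (auto intro!: bdd_aboveI2)
  define S where "S = (SUP F\<in>{F. finite F \<and> F \<subseteq> ?A}. sum (walk_prob w) F)"
  have hs: "(walk_prob w has_sum S) ?A" unfolding S_def
    by (rule nonneg_bdd_above_has_sum) (use nn bdd in auto)
  have "S \<le> 1" unfolding S_def
    by (rule cSUP_least) (use bound in auto)
  moreover have "1 - hh w i M i \<le> S" for M
  proof -
    have "bdd_above (sum (walk_prob w) ` {F. finite F \<and> F \<subseteq> ?A})" using bdd by (simp add: conj_commute)
    then have "sum (walk_prob w) (\<Union>m<M. Bs w i m i) \<le> S"
      unfolding S_def by (rule cSUP_upper[rotated]) (use U_sub U_fin in auto)
    then show ?thesis by (simp add: U_sum)
  qed
  moreover have "(\<lambda>M. 1 - hh w i M i) \<longlonglongrightarrow> 1 - 0" by (intro tendsto_intros hh_lim[OF cg card2])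
  ultimately have "S = 1" using LIMSEQ_le_const2[of "\<lambda>M. 1 - hh w i M i" 1 S] by force
  then show ?thesis using hs by simp
qed

end

context
  fixes w :: "'v::finite \<Rightarrow> 'v \<Rightarrow> real" and \<sigma> :: "'v \<Rightarrow> 'v \<Rightarrow> real^'d::finite^'d"
  assumes cg: "connection_graph w \<sigma>" and card2: "CARD('v) \<ge> 2"
begin

lemma FRW_walk: "\<gamma> \<in> first_return_walks w i \<Longrightarrow> iswalk w \<gamma>"
  unfolding first_return_walks_def using iswalk_nth by blast

lemma walk_prob_pos: "iswalk w p \<Longrightarrow> walk_prob w p > 0"
proof (induction p rule: induct_list012)
  case (3 x y zs)
  then show ?case using deg_pos[OF cg card2, of x] by simp
qed auto

lemma Om_summable: "(\<lambda>\<gamma>. walk_prob w \<gamma> *\<^sub>R walk_prod \<sigma> \<gamma>) summable_on first_return_walks w i"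
proof -
  let ?A = "first_return_walks w i"
  have nn: "walk_prob w \<gamma> \<ge> 0" for \<gamma> using walk_prob_nn w_nn[OF cg] by blast
  have "(\<lambda>\<gamma>. walk_prob w \<gamma> * real CARD('d)) summable_on ?A"
    using FRW_has_sum[OF cg card2, of i] by (intro summable_on_cmult_left) (auto simp: summable_on_def)
  then have g: "(\<lambda>\<gamma>. norm (walk_prob w \<gamma> * real CARD('d))) summable_on ?A"
    by (rule summable_on_cong[THEN iffD1, rotated]) (simp add: nn)
  have "(\<lambda>\<gamma>. norm (walk_prob w \<gamma> *\<^sub>R walk_prod \<sigma> \<gamma>)) summable_on ?A"
  proof (rule Infinite_Sum.abs_summable_on_comparison_test[OF g])
    fix \<gamma> assume "\<gamma> \<in> ?A"
    then have "orthogonal_matrix (walk_prod \<sigma> \<gamma>)" using walk_orth[OF cg] FRW_walk by blast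
    then have "norm (walk_prod \<sigma> \<gamma>) \<le> real CARD('d)" by (rule orth_norm_bound)
    then show "norm (walk_prob w \<gamma> *\<^sub>R walk_prod \<sigma> \<gamma>) \<le> norm (walk_prob w \<gamma> * real CARD('d))"
      using nn[of \<gamma>] by (simp add: mult_left_mono)
  qed
  then show ?thesis by (rule Infinite_Sum.abs_summable_summable)
qed

lemma Om_quad:
  "((\<lambda>\<gamma>. walk_prob w \<gamma> * (x \<bullet> (walk_prod \<sigma> \<gamma> *v x))) has_sum (x \<bullet> (Omega1 w \<sigma> i *v x)))
     (first_return_walks w i)"
proof -
  let ?h = "\<lambda>M :: real^'d^'d. x \<bullet> (M *v x)"
  have "linear ?h"
    by (rule linearI) (simp_all add: matrix_vector_mult_add_rdistrib inner_add_right
        scaleR_matrix_vector_assoc[symmetric])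
  then have bl: "bounded_linear ?h" by (simp add: linear_conv_bounded_linear)
  have "((\<lambda>\<gamma>. ?h (walk_prob w \<gamma> *\<^sub>R walk_prod \<sigma> \<gamma>)) has_sum ?h (Omega1 w \<sigma> i)) (first_return_walks w i)"
    unfolding Omega1_def by (rule has_sum_bounded_linear[OF bl has_sum_infsum[OF Om_summable]])
  then show ?thesis by (simp add: scaleR_matrix_vector_assoc[symmetric])
qed

end

theorem theorem4p12:
  fixes w :: "'v::finite \<Rightarrow> 'v \<Rightarrow> real" and \<sigma> :: "'v \<Rightarrow> 'v \<Rightarrow> real^'d::finite^'d"
  assumes "connection_graph w \<sigma>" and "CARD('v) \<ge> 2"
  shows "invertible (conn_laplacian w \<sigma>) \<longleftrightarrow> (\<forall>i. pos_def (mat 1 - Omega1 w \<sigma> i))"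
proof
  note cg = assms(1) and card2 = assms(2)
  assume inv: "invertible (conn_laplacian w \<sigma>)"
  show "\<forall>i. pos_def (mat 1 - Omega1 w \<sigma> i)"
    unfolding pos_def_def
  proof (intro allI impI)
    fix i and x :: "real^'d"
    assume x0: "x \<noteq> 0"
    show "0 < x \<bullet> ((mat 1 - Omega1 w \<sigma> i) *v x)"
    proof (rule ccontr)
      assume "\<not> 0 < x \<bullet> ((mat 1 - Omega1 w \<sigma> i) *v x)"
      then have le: "x \<bullet> x - x \<bullet> (Omega1 w \<sigma> i *v x) \<le> 0"
        by (simp add: matrix_vector_mult_diff_rdistrib inner_diff_right)
      let ?A = "first_return_walks w i"
      let ?q = "\<lambda>\<gamma>. walk_prob w \<gamma> * (norm (x - walk_prod \<sigma> \<gamma> *v x))^2 / 2"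
      have qeq: "?q \<gamma> = walk_prob w \<gamma> * (x \<bullet> x) - walk_prob w \<gamma> * (x \<bullet> (walk_prod \<sigma> \<gamma> *v x))"
        if "\<gamma> \<in> ?A" for \<gamma>
      proof -
        have "orthogonal_matrix (walk_prod \<sigma> \<gamma>)" using walk_orth[OF cg] FRW_walk[OF cg card2] that by blast
        from orth_inner[OF this, of x]
        have e: "(norm (x - walk_prod \<sigma> \<gamma> *v x))^2 / 2 = (norm x)^2 - x \<bullet> (walk_prod \<sigma> \<gamma> *v x)"
          by linarith
        have "?q \<gamma> = walk_prob w \<gamma> * ((norm (x - walk_prod \<sigma> \<gamma> *v x))^2 / 2)" by simp
        also have "\<dots> = walk_prob w \<gamma> * ((norm x)^2 - x \<bullet> (walk_prod \<sigma> \<gamma> *v x))" by (simp only: e)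
        finally show ?thesis by (simp add: power2_norm_eq_inner right_diff_distrib)
      qed
      have h1: "((\<lambda>\<gamma>. walk_prob w \<gamma> * (x \<bullet> x)) has_sum (1 * (x \<bullet> x))) ?A"
        by (rule has_sum_cmult_left[OF FRW_has_sum[OF cg card2]])
      have h2: "((\<lambda>\<gamma>. - (walk_prob w \<gamma> * (x \<bullet> (walk_prod \<sigma> \<gamma> *v x)))) has_sum (- (x \<bullet> (Omega1 w \<sigma> i *v x)))) ?A"
        using Om_quad[OF cg card2, of x i] by (simp add: has_sum_uminus)
      have "((\<lambda>\<gamma>. walk_prob w \<gamma> * (x \<bullet> x) + - (walk_prob w \<gamma> * (x \<bullet> (walk_prod \<sigma> \<gamma> *v x))))
               has_sum (1 * (x \<bullet> x) + - (x \<bullet> (Omega1 w \<sigma> i *v x)))) ?A"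
        by (rule has_sum_add[OF h1 h2])
      then have hq: "(?q has_sum (x \<bullet> x - x \<bullet> (Omega1 w \<sigma> i *v x))) ?A"
        by (subst has_sum_cong[OF qeq]) simp_all
      have fixall: "walk_prod \<sigma> \<gamma> *v x = x" if g: "\<gamma> \<in> ?A" for \<gamma>
      proof -
        have "?q \<gamma> = 0"
          by (rule nonneg_has_sum_le_0D[OF hq le _ g])
             (use walk_prob_nn[OF w_nn[OF cg]] in \<open>auto intro!: mult_nonneg_nonneg\<close>)
        moreover have "walk_prob w \<gamma> > 0" using walk_prob_pos[OF cg card2] FRW_walk[OF cg card2] g by blast
        ultimately show ?thesis by simp
      qed
      obtain F where "F i \<noteq> 0" "\<forall>a b. w a b > 0 \<longrightarrow> F a = \<sigma> a b *v F b"
        using fix_section[OF cg fixall x0] by blast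
      then show False using inv invertible_iff_sections[OF cg] by blast
    qed
  qed
next
  note cg = assms(1) and card2 = assms(2)
  assume pd: "\<forall>i. pos_def (mat 1 - Omega1 w \<sigma> i)"
  show "invertible (conn_laplacian w \<sigma>)"
  proof (rule ccontr)
    assume "\<not> invertible (conn_laplacian w \<sigma>)"
    then obtain F a where Fa: "F a \<noteq> 0" and cons: "\<forall>a b. w a b > 0 \<longrightarrow> F a = \<sigma> a b *v F b"
      using invertible_iff_sections[OF cg] by blast
    let ?A = "first_return_walks w a"
    define x where "x = F a"
    have fx: "x \<bullet> (walk_prod \<sigma> \<gamma> *v x) = x \<bullet> x" if g: "\<gamma> \<in> ?A" for \<gamma>
    proof -
      from g have "length \<gamma> \<ge> 2" "hd \<gamma> = a" "last \<gamma> = a" unfolding first_return_walks_def by auto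
      then obtain r where r: "\<gamma> = a # r" by (cases \<gamma>) auto
      have "F a = walk_prod \<sigma> (a # r) *v F (last (a # r))"
        by (rule section_walk[OF cg]) (use cons FRW_walk[OF cg card2] g r in auto)
      then show ?thesis using r \<open>last \<gamma> = a\<close> unfolding x_def by simp
    qed
    have h1: "((\<lambda>\<gamma>. walk_prob w \<gamma> * (x \<bullet> (walk_prod \<sigma> \<gamma> *v x))) has_sum (x \<bullet> (Omega1 w \<sigma> a *v x))) ?A"
      by (rule Om_quad[OF cg card2])
    have "((\<lambda>\<gamma>. walk_prob w \<gamma> * (x \<bullet> x)) has_sum (1 * (x \<bullet> x))) ?A"
      by (rule has_sum_cmult_left[OF FRW_has_sum[OF cg card2]])
    then have h2: "((\<lambda>\<gamma>. walk_prob w \<gamma> * (x \<bullet> (walk_prod \<sigma> \<gamma> *v x))) has_sum (x \<bullet> x)) ?A"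
      by (subst has_sum_cong[where g = "\<lambda>\<gamma>. walk_prob w \<gamma> * (x \<bullet> x)"]) (simp_all add: fx)
    have "x \<bullet> (Omega1 w \<sigma> a *v x) = x \<bullet> x" using has_sum_unique[OF h1 h2] .
    then have "x \<bullet> ((mat 1 - Omega1 w \<sigma> a) *v x) = 0"
      by (simp add: matrix_vector_mult_diff_rdistrib inner_diff_right)
    moreover have "x \<noteq> 0" using Fa x_def by simp
    ultimately show False using pd unfolding pos_def_def by (metis less_irrefl)
  qed
qed

end
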